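(* There is a constant $C>0$ such that $|L_{nl}|\le C\sqrt{n+1}$ for all integers $0\le l\le n$.
   Context: With $\Lambda(z)=\frac{\Gamma(z+1/2)}{\Gamma(z+1)}$, the coefficients $L_{nl}$ ($0\le l\le n$) are defined by: $L_{nl}=1$ if $n=l=0$; $L_{nl}=\frac{\sqrt\pi}{2\Lambda(n)}$ if $n=l>0$; $L_{nl}=\frac{-n(l+1/2)}{(n+l+1)(n-l)}\Lambda\!\left(\frac{n-l-2}{2}\right)\Lambda\!\left(\frac{n+l-1}{2}\right)$ if $n>l$ and $n+l$ is even; $L_{nl}=0$ otherwise. *)

theory Defs
  imports "HOL-Analysis.Analysis"
begin

definition Lam :: "real \<Rightarrow> real" where
  "Lam z = Gamma (z + 1/2) / Gamma (z + 1)"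

definition Lcoef :: "nat \<Rightarrow> nat \<Rightarrow> real" where
  "Lcoef n l =
    (if n = 0 \<and> l = 0 then 1
     else if n = l \<and> n > 0 then sqrt pi / (2 * Lam (real n))
     else if n > l \<and> even (n + l) then
       (- real n * (real l + 1/2)) / ((real n + real l + 1) * (real n - real l))
         * Lam ((real n - real l - 2) / 2) * Lam ((real n + real l - 1) / 2)
     else 0)"

end

theory Submission
  imports Defs
begin

lemma Lam_pos: "x \<ge> 0 \<Longrightarrow> Lam x > 0"
  unfolding Lam_def by (intro divide_pos_pos Gamma_real_pos) auto

lemma Lam_step:
  assumes "x \<ge> 0"
  shows "Lam (x + 1) = Lam x * (x + 1/2) / (x + 1)"
proof -
  have a: "x + 1/2 \<notin> \<int>\<^sub>\<le>\<^sub>0" using assms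
    by (metis add_nonneg_pos divide_pos_pos less_numeral_extra(1) nonpos_Ints_nonpos not_le zero_less_numeral)
  have b: "x + 1 \<notin> \<int>\<^sub>\<le>\<^sub>0" using assms
    by (metis add_nonneg_pos less_numeral_extra(1) nonpos_Ints_nonpos not_le)
  have "Gamma (x + 1 + 1/2) = (x + 1/2) * Gamma (x + 1/2)"
    using Gamma_plus1[OF a] by (simp add: add_ac)
  moreover have "Gamma (x + 1 + 1) = (x + 1) * Gamma (x + 1)"
    using Gamma_plus1[OF b] .
  moreover have "Gamma (x+1) > 0" using assms by auto
  moreover have "Gamma (x+1/2) > 0" using assms by auto
  ultimately have "Lam (x + 1) = ((x + 1/2) * Gamma (x + 1/2)) / ((x + 1) * Gamma (x + 1))"
    unfolding Lam_def by (simp only:)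
  also have "\<dots> = Lam x * (x + 1/2) / (x + 1)" unfolding Lam_def by (simp add: ac_simps)
  finally show ?thesis .
qed

lemma Lam_zero: "Lam 0 = sqrt pi"
  unfolding Lam_def using Gamma_one_half_real by simp

lemma Lam_half: "Lam (1/2) = 2 / sqrt pi"
proof -
  have h: "(1/2::real) \<notin> \<int>\<^sub>\<le>\<^sub>0"
    by (metis divide_pos_pos nonpos_Ints_nonpos not_le zero_less_numeral zero_less_one)
  have "Gamma (1/2 + 1 :: real) = 1/2 * sqrt pi"
    using Gamma_plus1[OF h] Gamma_one_half_real by simp
  then have g: "Gamma (3/2 :: real) = sqrt pi / 2" by simp
  have "Lam (1/2) = Gamma 1 / Gamma (3/2)" unfolding Lam_def by simp
  also have "\<dots> = 2 / sqrt pi" unfolding g by simp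
  finally show ?thesis .
qed

lemma Lam_one: "Lam 1 = sqrt pi / 2"
  using Lam_step[of 0] Lam_zero by simp

lemma Lam_up: "(Lam (real k / 2))^2 * (real k / 2 + 1/2) \<le> 2"
proof (induction k rule: less_induct)
  case (less k)
  show ?case
  proof (cases "k \<ge> 2")
    case True
    then obtain j where j: "k = j + 2" by (metis add.commute le_Suc_ex)
    define x where "x = real j / 2"
    have x0: "x \<ge> 0" unfolding x_def by simp
    have kx: "real k / 2 = x + 1" unfolding x_def j by simp
    have IH: "(Lam x)^2 * (x + 1/2) \<le> 2" using less[of j] j unfolding x_def by simp
    have sq: "(Lam (x+1))^2 = (Lam x)^2 * (x+1/2)^2 / (x+1)^2"
      using Lam_step[OF x0] by (simp add: power_divide power_mult_distrib)
    have "(Lam (x+1))^2 * (x + 1 + 1/2) = (Lam x)^2 * (x + 1/2) * ((x+1/2)*(x+3/2)/(x+1)^2)"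
      unfolding sq using x0 by (simp add: field_simps power2_eq_square)
    also have "\<dots> \<le> (Lam x)^2 * (x + 1/2) * 1"
    proof (rule mult_left_mono)
      have "(x+1/2)*(x+3/2) \<le> (x+1)^2" by (simp add: power2_eq_square field_simps)
      moreover have "(x+1)^2 > 0" using x0 by simp
      ultimately show "(x+1/2)*(x+3/2)/(x+1)^2 \<le> 1" by simp
      show "0 \<le> (Lam x)^2 * (x + 1/2)" using x0 by simp
    qed
    finally have c: "(Lam (x+1))^2 * (x + 1 + 1/2) \<le> (Lam x)^2 * (x + 1/2)" by simp
    have "(Lam (x+1))^2 * (x + 1 + 1/2) \<le> 2" using c IH by linarith
    then show ?thesis by (simp only: kx)
  next
    case False
    then have "k = 0 \<or> k = 1" by auto
    then show ?thesis
    proof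
      assume "k = 0" then show ?thesis using Lam_zero pi_less_4 by simp
    next
      assume "k = 1"
      then have "(Lam (real k / 2))^2 * (real k / 2 + 1/2) = 4 / pi"
        using Lam_half by (simp add: power_divide)
      also have "\<dots> \<le> 2" using pi_gt3 by (simp add: field_simps)
      finally show ?thesis .
    qed
  qed
qed

lemma Lam_low: "n \<ge> 1 \<Longrightarrow> (Lam (real n))^2 * real n \<ge> pi / 4"
proof (induction n rule: dec_induct)
  case base
  have "(Lam 1)^2 = pi / 4" unfolding Lam_one by (simp add: power_divide)
  then show ?case by simp
next
  case (step m)
  define x where "x = real m"
  have x1: "x \<ge> 1" using step unfolding x_def by simp
  have sq: "(Lam (x+1))^2 = (Lam x)^2 * (x+1/2)^2 / (x+1)^2"
    using Lam_step[of x] x1 by (simp add: power_divide power_mult_distrib)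
  have "(Lam (x+1))^2 * (x+1) = (Lam x)^2 * x * ((x+1/2)^2/(x*(x+1)))"
  proof -
    have "x \<noteq> 0" "x + 1 \<noteq> 0" using x1 by auto
    then show ?thesis unfolding sq by (simp add: divide_simps) (simp add: algebra_simps power2_eq_square)
  qed
  also have "\<dots> \<ge> (Lam x)^2 * x * 1"
  proof (rule mult_left_mono)
    have "x*(x+1) \<le> (x+1/2)^2" by (simp add: power2_eq_square algebra_simps)
    moreover have "x*(x+1) > 0" using x1 by simp
    ultimately show "1 \<le> (x+1/2)^2/(x*(x+1))" by simp
    show "0 \<le> (Lam x)^2 * x" using x1 by simp
  qed
  finally have c: "(Lam (x+1))^2 * (x+1) \<ge> (Lam x)^2 * x" by simp
  have "pi/4 \<le> (Lam (x+1))^2 * (x+1)" using c step.IH unfolding x_def by linarith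
  then show ?case unfolding x_def by (simp add: add.commute)
qed

lemma sq_bound:
  fixes n l :: nat
  assumes "l \<le> n"
  shows "(Lcoef n l)^2 \<le> 4 * (real n + 1)"
proof -
  consider "n = 0 \<and> l = 0" | "n = l \<and> n > 0" | "n > l \<and> even (n + l)" | "n > l \<and> odd (n + l)"
    using assms by linarith
  then show ?thesis
  proof cases
    case 1 then show ?thesis by (simp add: Lcoef_def)
  next
    case 2
    then have L: "Lcoef n l = sqrt pi / (2 * Lam (real n))" by (simp add: Lcoef_def)
    have low: "(Lam (real n))^2 * real n \<ge> pi / 4" using Lam_low 2 by simp
    have pos: "Lam (real n) > 0" by (simp add: Lam_pos)
    have "(Lcoef n l)^2 = pi / (4 * (Lam (real n))^2)"
      unfolding L by (simp add: power_divide power_mult_distrib)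
    also have "\<dots> \<le> real n" using low pos by (simp add: divide_le_eq mult.commute)
    finally show ?thesis by simp
  next
    case 4 then show ?thesis by (simp add: Lcoef_def)
  next
    case 3
    then have d2: "n - l \<ge> 2" by (metis Suc_leI add_diff_inverse_nat diff_add_zero even_Suc le_add_diff_inverse2 less_diff_conv2 less_imp_le_nat linorder_not_le odd_add odd_one one_add_one plus_1_eq_Suc zero_less_diff)
    define d where "d = real n - real l"
    define s where "s = real n + real l"
    define A where "A = Lam ((real n - real l - 2) / 2)"
    define B where "B = Lam ((real n + real l - 1) / 2)"
    define c where "c = (real n * (real l + 1/2)) / ((real n + real l + 1) * (real n - real l))"
    have dge: "d \<ge> 2" unfolding d_def using d2 3 by linarith
    have sge: "s \<ge> real n" unfolding s_def by simp
    have npos: "real n \<ge> 2" using d2 by linarith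
    have L: "Lcoef n l = - c * A * B" using 3 unfolding Lcoef_def c_def A_def B_def by simp
    have eA: "real (n - l - 2) / 2 = (real n - real l - 2) / 2" using d2 by (simp add: of_nat_diff)
    have hA0: "A^2 * (real (n - l - 2) / 2 + 1/2) \<le> 2" using Lam_up[of "n - l - 2"] unfolding A_def eA .
    have hA: "A^2 * (d - 1) \<le> 4"
    proof -
      have e: "real (n - l - 2) / 2 + 1/2 = (d - 1) / 2" unfolding d_def using d2 by (simp add: of_nat_diff field_simps)
      have "A^2 * ((d - 1) / 2) \<le> 2" using hA0 unfolding e .
      then show ?thesis by simp
    qed
    have eB: "real (n + l - 1) / 2 = (real n + real l - 1) / 2" using npos by (simp add: of_nat_diff)
    have hB0: "B^2 * (real (n + l - 1) / 2 + 1/2) \<le> 2" using Lam_up[of "n + l - 1"] unfolding B_def eB .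
    have hB: "B^2 * s \<le> 4"
    proof -
      have e: "real (n + l - 1) / 2 + 1/2 = s / 2" unfolding s_def using npos by (simp add: of_nat_diff field_simps)
      have "B^2 * (s / 2) \<le> 2" using hB0 unfolding e .
      then show ?thesis by simp
    qed
    have c0: "c \<ge> 0" unfolding c_def using 3 by simp
    have cle: "c \<le> real n / d"
    proof -
      have "real n * (real l + 1/2) \<le> real n * (real n + real l + 1)" by (intro mult_left_mono) auto
      then have "c \<le> real n * (real n + real l + 1) / ((real n + real l + 1) * d)"
        unfolding c_def d_def using dge d_def by (intro divide_right_mono) auto
      also have "\<dots> = real n / d" by simp
      finally show ?thesis .
    qed
    have AB: "A^2 * B^2 * ((d - 1) * s) \<le> 16"
    proof -
      have "A^2 * B^2 * ((d - 1) * s) = (A^2 * (d - 1)) * (B^2 * s)" by (simp add: algebra_simps)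
      also have "\<dots> \<le> 4 * 4" using hA hB dge sge by (intro mult_mono) auto
      finally show ?thesis by simp
    qed
    have dspos: "(d - 1) * s > 0" using dge sge npos by simp
    have AB2: "A^2 * B^2 \<le> 16 / ((d - 1) * s)" using AB dspos by (simp add: le_divide_eq)
    have "(Lcoef n l)^2 = c^2 * (A^2 * B^2)" unfolding L by (simp add: power_mult_distrib)
    also have "\<dots> \<le> (real n / d)^2 * (16 / ((d - 1) * s))"
      using c0 cle AB2 by (intro mult_mono power_mono) auto
    also have "\<dots> = 16 * (real n)^2 / (d^2 * (d - 1) * s)" using dge by (simp add: power_divide field_simps)
    also have "\<dots> \<le> 4 * real n"
    proof -
      have "d^2 * (d - 1) \<ge> 4" using dge
      proof -
        have "(2::real)^2 \<le> d^2" using dge by (intro power_mono) auto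
        then have "d^2 \<ge> 4" by simp
        moreover have "d - 1 \<ge> 1" using dge by simp
        ultimately show ?thesis by (metis mult_mono mult.right_neutral order_trans zero_le_numeral zero_le_one)
      qed
      then have "d^2 * (d - 1) * s \<ge> 4 * real n" using sge npos by (intro mult_mono) auto
      moreover have "d^2 * (d - 1) * s > 0"
      proof -
        have "d^2 > 0" using dge by simp
        then have "d^2 * ((d - 1) * s) > 0" using dspos by (rule mult_pos_pos)
        then show ?thesis by (simp add: mult.assoc)
      qed
      ultimately show ?thesis
      proof -
        assume P: "d^2 * (d - 1) * s \<ge> 4 * real n" and Q: "d^2 * (d - 1) * s > 0"
        have "16 * (real n)^2 = (4 * real n) * (4 * real n)" by (simp add: power2_eq_square)
        also have "\<dots> \<le> (4 * real n) * (d^2 * (d - 1) * s)" using P npos by (intro mult_left_mono) auto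
        finally show ?thesis using Q by (simp add: divide_le_eq)
      qed
    qed
    finally show ?thesis by simp
  qed
qed

theorem mainTheorem5:
  shows "\<exists>C::real. C > 0 \<and> (\<forall>n l::nat. l \<le> n \<longrightarrow> \<bar>Lcoef n l\<bar> \<le> C * sqrt (real n + 1))"
proof (intro exI[of _ 2] conjI allI impI)
  fix n l :: nat assume "l \<le> n"
  then have "(Lcoef n l)^2 \<le> 4 * (real n + 1)" by (rule sq_bound)
  then have "sqrt ((Lcoef n l)^2) \<le> sqrt (4 * (real n + 1))" by (rule real_sqrt_le_mono)
  moreover have "sqrt (4 * (real n + 1)) = 2 * sqrt (real n + 1)"
    by (simp only: real_sqrt_mult) simp
  ultimately show "\<bar>Lcoef n l\<bar> \<le> 2 * sqrt (real n + 1)" by simp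
qed simp

end
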